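(* Let $u$ be a stable sorted configuration on $K_{m,n}$ with $r$-vector $(r_1,\dots,r_n)$. Let $h$ be the smallest index $1\le h\le n$ with $r_h=\max\{r_1,\dots,r_n\}$, and let $k:=u_{b_h}-r_h+2$ (so $k=1+\#\{j\le m-1: u_{a_j}+1\le h-1\}$; one has $1\le k\le m-1$ when $m\ge 2$). Define $$u':=u+(r_h-2)\Delta^{(a_m)}-\sum_{s=k}^{m-1}\Delta^{(a_s)}-\sum_{t=h}^{n}\Delta^{(b_t)}.$$ Then $u'=\mathrm{park}(u)$. Explicitly, $u'_{b_i}=u_{b_i}-u_{b_h}+m\,\chi(i\le h-1)$ for $1\le i\le n$, $u'_{a_j}=u_{a_j}-(h-1)+n\,\chi(j\le k-1)$ for $1\le j\le m-1$, and $u'_{a_m}=\mathrm{degree}(u)-\sum_i u'_{b_i}-\sum_{j\le m-1}u'_{a_j}$; moreover the sorted version of $u'$ has $a$-values $(u'_{a_k},\dots,u'_{a_{m-1}},u'_{a_1},\dots,u'_{a_{k-1}})$ and $b$-values $(u'_{b_h},\dots,u'_{b_n},u'_{b_1},\dots,u'_{b_{h-1}})$ (with the same sink value).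
   Context: Let $m,n\ge 1$. $K_{m,n}$ is the complete bipartite graph with vertex set $V=A_m\sqcup B_n$, $A_m=\{a_1,\dots,a_m\}$, $B_n=\{b_1,\dots,b_n\}$, with exactly one edge $\{a_i,b_j\}$ for every $i,j$; $a_m$ is the sink. A configuration is a function $u:V\to\mathbb Z$; $\mathrm{degree}(u)=\sum_c u_c$. For $c\in V$ with graph degree $d_c$ ($d_{a_i}=n$, $d_{b_j}=m$), $\Delta^{(c)}=d_c e_c-\sum_{c'\text{ adjacent to }c}e_{c'}$, with $e_c$ the indicator configuration of $c$; $\Delta^{(C)}=\sum_{c\in C}\Delta^{(c)}$. A configuration $u$ is parking if $u_c\ge0$ for all $c\neq a_m$ and for every non-empty $C\subseteq V\setminus\{a_m\}$, $u-\Delta^{(C)}$ has a negative value at some vertex other than $a_m$; every configuration is toppling equivalent (difference in the integer span of the $\Delta^{(c)}$) to a unique parking configuration $\mathrm{park}(u)$. $u$ is stable if $0\le u_{a_j}\le n-1$ for $1\le j\le m-1$ and $0\le u_{b_i}\le m-1$ for all $i$; sorted if $u_{a_1}\le\dots\le u_{a_{m-1}}$ and $u_{b_1}\le\dots\le u_{b_n}$ (no condition at the sink). The $r$-vector of a stable sorted $u$ is $(r_1,\dots,r_n)$ with $r_i=u_{b_i}+1-\#\{j\in\{1,\dots,m-1\}: u_{a_j}+1\le i-1\}$. $\chi(\mathcal P)$ is $1$ if $\mathcal P$ holds and $0$ otherwise. *)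

theory Defs
  imports Main
begin

text \<open>Vertices of K_{m,n}: A i (1 \<le> i \<le> m) and B j (1 \<le> j \<le> n); the sink is A m.
  Configurations are functions vert \<Rightarrow> int; only their values on verts m n matter.\<close>

datatype vert = A nat | B nat

definition verts :: "nat \<Rightarrow> nat \<Rightarrow> vert set" where
  "verts m n = A ` {1..m} \<union> B ` {1..n}"

definition adjacent :: "nat \<Rightarrow> nat \<Rightarrow> vert \<Rightarrow> vert \<Rightarrow> bool" where
  "adjacent m n c c' = (\<exists>i\<in>{1..m}. \<exists>j\<in>{1..n}. {c, c'} = {A i, B j})"

definition nbrs :: "nat \<Rightarrow> nat \<Rightarrow> vert \<Rightarrow> vert set" where
  "nbrs m n c = {c' \<in> verts m n. adjacent m n c c'}"

definition gdeg :: "nat \<Rightarrow> nat \<Rightarrow> vert \<Rightarrow> nat" where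
  "gdeg m n c = card (nbrs m n c)"

definition ind :: "vert \<Rightarrow> vert \<Rightarrow> int" where
  "ind c = (\<lambda>x. if x = c then 1 else 0)"

definition Lap :: "nat \<Rightarrow> nat \<Rightarrow> vert \<Rightarrow> vert \<Rightarrow> int" where
  "Lap m n c = (\<lambda>x. int (gdeg m n c) * ind c x - (\<Sum>c'\<in>nbrs m n c. ind c' x))"

definition LapSet :: "nat \<Rightarrow> nat \<Rightarrow> vert set \<Rightarrow> vert \<Rightarrow> int" where
  "LapSet m n C = (\<lambda>x. \<Sum>c\<in>C. Lap m n c x)"

definition topp_equiv :: "nat \<Rightarrow> nat \<Rightarrow> (vert \<Rightarrow> int) \<Rightarrow> (vert \<Rightarrow> int) \<Rightarrow> bool" where
  "topp_equiv m n u v =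
     (\<exists>z :: vert \<Rightarrow> int. \<forall>x\<in>verts m n. u x - v x = (\<Sum>c\<in>verts m n. z c * Lap m n c x))"

definition parking :: "nat \<Rightarrow> nat \<Rightarrow> (vert \<Rightarrow> int) \<Rightarrow> bool" where
  "parking m n u =
     ((\<forall>c\<in>verts m n - {A m}. 0 \<le> u c) \<and>
      (\<forall>C. C \<subseteq> verts m n - {A m} \<and> C \<noteq> {} \<longrightarrow>
           (\<exists>c\<in>verts m n - {A m}. u c - LapSet m n C c < 0)))"

definition park :: "nat \<Rightarrow> nat \<Rightarrow> (vert \<Rightarrow> int) \<Rightarrow> vert \<Rightarrow> int" where
  "park m n u = (THE v. parking m n v \<and> topp_equiv m n u v \<and> (\<forall>x. x \<notin> verts m n \<longrightarrow> v x = 0))"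

definition degree :: "nat \<Rightarrow> nat \<Rightarrow> (vert \<Rightarrow> int) \<Rightarrow> int" where
  "degree m n u = (\<Sum>c\<in>verts m n. u c)"

definition stable :: "nat \<Rightarrow> nat \<Rightarrow> (vert \<Rightarrow> int) \<Rightarrow> bool" where
  "stable m n u = ((\<forall>j\<in>{1..m-1}. 0 \<le> u (A j) \<and> u (A j) \<le> int n - 1) \<and>
                   (\<forall>i\<in>{1..n}. 0 \<le> u (B i) \<and> u (B i) \<le> int m - 1))"

definition sorted_config :: "nat \<Rightarrow> nat \<Rightarrow> (vert \<Rightarrow> int) \<Rightarrow> bool" where
  "sorted_config m n u = ((\<forall>j1\<in>{1..m-1}. \<forall>j2\<in>{1..m-1}. j1 \<le> j2 \<longrightarrow> u (A j1) \<le> u (A j2)) \<and>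
                         (\<forall>i1\<in>{1..n}. \<forall>i2\<in>{1..n}. i1 \<le> i2 \<longrightarrow> u (B i1) \<le> u (B i2)))"

definition rvec :: "nat \<Rightarrow> nat \<Rightarrow> (vert \<Rightarrow> int) \<Rightarrow> nat \<Rightarrow> int" where
  "rvec m n u i = u (B i) + 1 - int (card {j\<in>{1..m-1}. u (A j) + 1 \<le> int i - 1})"

definition chi :: "bool \<Rightarrow> int" where
  "chi P = (if P then 1 else 0)"

end

theory Submission
  imports Defs
begin


lemma nbrs_A: "i \<in> {1..m} \<Longrightarrow> nbrs m n (A i) = B ` {1..n}"
  unfolding nbrs_def adjacent_def verts_def by (auto simp: doubleton_eq_iff)

lemma nbrs_B: "j \<in> {1..n} \<Longrightarrow> nbrs m n (B j) = A ` {1..m}"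
  unfolding nbrs_def adjacent_def verts_def by (auto simp: doubleton_eq_iff)

lemma sum_ind: "finite S \<Longrightarrow> (\<Sum>c'\<in>S. ind c' x) = (if x \<in> S then 1 else 0)"
  unfolding ind_def by (simp add: sum.delta')

lemma Lap_A: "i \<in> {1..m} \<Longrightarrow> Lap m n (A i) x = int n * ind (A i) x - (if x \<in> B ` {1..n} then 1 else 0)"
  unfolding Lap_def gdeg_def using nbrs_A[of i m n] by (simp add: sum_ind card_image inj_on_def)

lemma Lap_B: "j \<in> {1..n} \<Longrightarrow> Lap m n (B j) x = int m * ind (B j) x - (if x \<in> A ` {1..m} then 1 else 0)"
  unfolding Lap_def gdeg_def using nbrs_B[of j n m] by (simp add: sum_ind card_image inj_on_def)

lemma LapA_A: "i \<in> {1..m} \<Longrightarrow> Lap m n (A i) (A j) = (if j = i then int n else 0)"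
  by (simp add: Lap_A ind_def image_iff)
lemma LapA_B: "i \<in> {1..m} \<Longrightarrow> Lap m n (A i) (B j) = (if j \<in> {1..n} then -1 else 0)"
  by (auto simp add: Lap_A ind_def image_iff)
lemma LapB_B: "j \<in> {1..n} \<Longrightarrow> Lap m n (B j) (B i) = (if i = j then int m else 0)"
  by (simp add: Lap_B ind_def image_iff)
lemma LapB_A: "j \<in> {1..n} \<Longrightarrow> Lap m n (B j) (A i) = (if i \<in> {1..m} then -1 else 0)"
  by (auto simp add: Lap_B ind_def image_iff)

lemma sum_verts: "(\<Sum>c\<in>verts m n. f c) = (\<Sum>i=1..m. f (A i)) + (\<Sum>j=1..n. f (B j))"
proof -
  have "(\<Sum>c\<in>verts m n. f c) = (\<Sum>c\<in>A`{1..m}. f c) + (\<Sum>c\<in>B`{1..n}. f c)"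
    unfolding verts_def by (rule sum.union_disjoint) auto
  also have "\<dots> = (\<Sum>i=1..m. f (A i)) + (\<Sum>j=1..n. f (B j))"
    by (simp add: sum.reindex inj_on_def)
  finally show ?thesis .
qed

lemma Lz_A: assumes "i \<in> {1..m}" shows "(\<Sum>c\<in>verts m n. z c * Lap m n c (A i)) = int n * z (A i) - (\<Sum>j=1..n. z (B j))"
proof -
  have 1: "(\<Sum>x=1..m. z (A x) * Lap m n (A x) (A i)) = (\<Sum>x=1..m. if x = i then int n * z (A i) else 0)"
    by (rule sum.cong) (auto simp: LapA_A)
  have 2: "(\<Sum>x=1..n. z (B x) * Lap m n (B x) (A i)) = (\<Sum>x=1..n. - z (B x))"
    by (rule sum.cong) (use assms in \<open>auto simp: LapB_A\<close>)
  show ?thesis unfolding sum_verts 1 2 using assms by (simp add: sum_negf)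
qed

lemma Lz_B: assumes "j \<in> {1..n}" shows "(\<Sum>c\<in>verts m n. z c * Lap m n c (B j)) = int m * z (B j) - (\<Sum>i=1..m. z (A i))"
proof -
  have 1: "(\<Sum>x=1..n. z (B x) * Lap m n (B x) (B j)) = (\<Sum>x=1..n. if x = j then int m * z (B j) else 0)"
    by (rule sum.cong) (auto simp: LapB_B)
  have 2: "(\<Sum>x=1..m. z (A x) * Lap m n (A x) (B j)) = (\<Sum>x=1..m. - z (A x))"
    by (rule sum.cong) (use assms in \<open>auto simp: LapA_B\<close>)
  show ?thesis unfolding sum_verts 1 2 using assms by (simp add: sum_negf)
qed

lemma C_decomp: "C = A ` {i. A i \<in> C} \<union> B ` {j. B j \<in> C}"
proof (rule set_eqI)
  fix x show "x \<in> C \<longleftrightarrow> x \<in> A ` {i. A i \<in> C} \<union> B ` {j. B j \<in> C}" by (cases x) auto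
qed

lemma LapSet_AB: assumes "finite S" "finite T"
  shows "LapSet m n (A`S \<union> B`T) x = (\<Sum>i\<in>S. Lap m n (A i) x) + (\<Sum>j\<in>T. Lap m n (B j) x)"
proof -
  have "LapSet m n (A`S \<union> B`T) x = (\<Sum>c\<in>A`S. Lap m n c x) + (\<Sum>c\<in>B`T. Lap m n c x)"
    unfolding LapSet_def by (rule sum.union_disjoint) (use assms in auto)
  also have "\<dots> = (\<Sum>i\<in>S. Lap m n (A i) x) + (\<Sum>j\<in>T. Lap m n (B j) x)"
    by (simp add: sum.reindex inj_on_def)
  finally show ?thesis .
qed

lemma LapSet_A: assumes "S \<subseteq> {1..m}" "T \<subseteq> {1..n}" "j \<in> {1..m}"
  shows "LapSet m n (A`S \<union> B`T) (A j) = (if j \<in> S then int n else 0) - int (card T)"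
proof -
  have fin: "finite S" "finite T" using assms finite_subset by blast+
  have 1: "(\<Sum>i\<in>S. Lap m n (A i) (A j)) = (\<Sum>i\<in>S. if j = i then int n else 0)"
    by (rule sum.cong) (use assms in \<open>auto simp: LapA_A\<close>)
  have 2: "(\<Sum>i\<in>T. Lap m n (B i) (A j)) = (\<Sum>i\<in>T. -1)"
    by (rule sum.cong) (use assms in \<open>auto simp: LapB_A\<close>)
  show ?thesis unfolding LapSet_AB[OF fin] 1 2 using fin by (simp add: sum.delta')
qed

lemma LapSet_B: assumes "S \<subseteq> {1..m}" "T \<subseteq> {1..n}" "j \<in> {1..n}"
  shows "LapSet m n (A`S \<union> B`T) (B j) = (if j \<in> T then int m else 0) - int (card S)"
proof -
  have fin: "finite S" "finite T" using assms finite_subset by blast+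
  have 1: "(\<Sum>i\<in>T. Lap m n (B i) (B j)) = (\<Sum>i\<in>T. if j = i then int m else 0)"
    by (rule sum.cong) (use assms in \<open>auto simp: LapB_B\<close>)
  have 2: "(\<Sum>i\<in>S. Lap m n (A i) (B j)) = (\<Sum>i\<in>S. -1)"
    by (rule sum.cong) (use assms in \<open>auto simp: LapA_B\<close>)
  show ?thesis unfolding LapSet_AB[OF fin] 1 2 using fin by (simp add: sum.delta')
qed

lemma sum_notin_card: assumes "finite I" "T \<subseteq> I"
  shows "(\<Sum>i\<in>I. if i \<in> T then 0 else (1::int)) = int (card I) - int (card T)"
proof -
  have "(\<Sum>i\<in>I. if i \<in> T then 0 else (1::int)) = (\<Sum>i\<in>I - T. 1)"
    using assms by (simp add: sum.If_cases Diff_eq)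
  also have "\<dots> = int (card I) - int (card T)"
    using assms by (simp add: card_Diff_subset finite_subset of_nat_diff card_mono)
  finally show ?thesis .
qed

lemma verts_fin: "finite (verts m n)" unfolding verts_def by auto

lemma A_in_verts: "A i \<in> verts m n \<longleftrightarrow> i \<in> {1..m}" unfolding verts_def by auto
lemma B_in_verts: "B i \<in> verts m n \<longleftrightarrow> i \<in> {1..n}" unfolding verts_def by auto

lemma max_le_sink:
  assumes m: "1 \<le> m" and pv: "parking m n v" and w0: "\<forall>c\<in>verts m n - {A m}. 0 \<le> w c"
    and eq: "\<forall>x\<in>verts m n. v x - w x = (\<Sum>c\<in>verts m n. z c * Lap m n c x)"
  shows "\<forall>c\<in>verts m n. z c \<le> z (A m)"
proof (rule ccontr)
  assume "\<not> (\<forall>c\<in>verts m n. z c \<le> z (A m))"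
  then obtain c0 where c0: "c0 \<in> verts m n" "z c0 > z (A m)" by auto
  define M where "M = Max (z ` verts m n)"
  have zle: "\<forall>c\<in>verts m n. z c \<le> M" unfolding M_def using verts_fin by auto
  have Min: "M \<in> z ` verts m n" unfolding M_def using verts_fin c0 by (intro Max_in) auto
  have Mgt: "M > z (A m)" using zle c0 by force
  define S where "S = {i\<in>{1..m}. z (A i) = M}"
  define T where "T = {j\<in>{1..n}. z (B j) = M}"
  have ST: "S \<subseteq> {1..m}" "T \<subseteq> {1..n}" unfolding S_def T_def by auto
  have mS: "m \<notin> S" unfolding S_def using Mgt by auto
  have Csub: "A`S \<union> B`T \<subseteq> verts m n - {A m}" using ST mS unfolding verts_def by auto
  have Cne: "A`S \<union> B`T \<noteq> {}"
  proof -
    obtain c where c: "c \<in> verts m n" "z c = M" using Min by auto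
    show ?thesis using c unfolding S_def T_def verts_def by auto
  qed
  from pv Csub Cne obtain c where c: "c \<in> verts m n - {A m}" "v c - LapSet m n (A`S \<union> B`T) c < 0"
    unfolding parking_def by blast
  have v0: "\<forall>c\<in>verts m n - {A m}. 0 \<le> v c" using pv unfolding parking_def by blast
  show False
  proof (cases c)
    case (A j)
    have j: "j \<in> {1..m}" using c A by (simp add: A_in_verts)
    have LS: "LapSet m n (A`S \<union> B`T) (A j) = (if j \<in> S then int n else 0) - int (card T)"
      using LapSet_A[OF ST j] .
    show False
    proof (cases "j \<in> S")
      case True
      have zj: "z (A j) = M" using True S_def by auto
      have "(\<Sum>i=1..n. if i \<in> T then 0 else (1::int)) \<le> (\<Sum>i=1..n. M - z (B i))"
      proof (rule sum_mono)
        fix i assume i: "i \<in> {1..n}"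
        have "z (B i) \<le> M" using zle i by (simp add: B_in_verts)
        then show "(if i \<in> T then 0 else 1) \<le> M - z (B i)" using i unfolding T_def by auto
      qed
      also have "\<dots> = int n * M - (\<Sum>i=1..n. z (B i))" by (simp add: sum_subtractf)
      finally have "int n - int (card T) \<le> int n * z (A j) - (\<Sum>i=1..n. z (B i))"
        using sum_notin_card[of "{1..n}" T] ST zj by simp
      moreover have "v (A j) - w (A j) = int n * z (A j) - (\<Sum>i=1..n. z (B i))"
        using eq[rule_format, of "A j"] c A Lz_A[OF j, where n=n and z=z] by simp
      moreover have "0 \<le> w (A j)" using w0 c A by blast
      ultimately show False using c A LS True by simp
    next
      case False
      have "0 \<le> v (A j)" using v0 c A by blast
      then show False using c A LS False by simp
    qed
  next
    case (B j)
    have j: "j \<in> {1..n}" using c B by (simp add: B_in_verts)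
    have LS: "LapSet m n (A`S \<union> B`T) (B j) = (if j \<in> T then int m else 0) - int (card S)"
      using LapSet_B[OF ST j] .
    show False
    proof (cases "j \<in> T")
      case True
      have zj: "z (B j) = M" using True T_def by auto
      have "(\<Sum>i=1..m. if i \<in> S then 0 else (1::int)) \<le> (\<Sum>i=1..m. M - z (A i))"
      proof (rule sum_mono)
        fix i assume i: "i \<in> {1..m}"
        have "z (A i) \<le> M" using zle i by (simp add: A_in_verts)
        then show "(if i \<in> S then 0 else 1) \<le> M - z (A i)" using i unfolding S_def by auto
      qed
      also have "\<dots> = int m * M - (\<Sum>i=1..m. z (A i))" by (simp add: sum_subtractf)
      finally have "int m - int (card S) \<le> int m * z (B j) - (\<Sum>i=1..m. z (A i))"
        using sum_notin_card[of "{1..m}" S] ST zj by simp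
      moreover have "v (B j) - w (B j) = int m * z (B j) - (\<Sum>i=1..m. z (A i))"
        using eq[rule_format, of "B j"] c B Lz_B[OF j, where m=m and z=z] by simp
      moreover have "0 \<le> w (B j)" using w0 c B by blast
      ultimately show False using c B LS True by simp
    next
      case False
      have "0 \<le> v (B j)" using v0 c B by blast
      then show False using c B LS False by simp
    qed
  qed
qed

lemma park_unique:
  assumes m: "1 \<le> m" and pv: "parking m n v" and pw: "parking m n w" and te: "topp_equiv m n v w"
  shows "\<forall>x\<in>verts m n. v x = w x"
proof -
  obtain z where z: "\<forall>x\<in>verts m n. v x - w x = (\<Sum>c\<in>verts m n. z c * Lap m n c x)"
    using te unfolding topp_equiv_def by blast
  have w0: "\<forall>c\<in>verts m n - {A m}. 0 \<le> w c" using pw unfolding parking_def by blast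
  have v0: "\<forall>c\<in>verts m n - {A m}. 0 \<le> v c" using pv unfolding parking_def by blast
  have le1: "\<forall>c\<in>verts m n. z c \<le> z (A m)" using max_le_sink[OF m pv w0 z] .
  have z': "\<forall>x\<in>verts m n. w x - v x = (\<Sum>c\<in>verts m n. (- z c) * Lap m n c x)"
  proof
    fix x assume "x \<in> verts m n"
    then have "v x - w x = (\<Sum>c\<in>verts m n. z c * Lap m n c x)" using z by blast
    then show "w x - v x = (\<Sum>c\<in>verts m n. (- z c) * Lap m n c x)" by (simp add: sum_negf)
  qed
  have le2: "\<forall>c\<in>verts m n. - z c \<le> - z (A m)" using max_le_sink[OF m pw v0 z'] .
  have const: "\<forall>c\<in>verts m n. z c = z (A m)"
  proof
    fix c assume "c \<in> verts m n"
    then have "z c \<le> z (A m)" "- z c \<le> - z (A m)" using le1 le2 by blast+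
    then show "z c = z (A m)" by linarith
  qed
  show ?thesis
  proof
    fix x assume x: "x \<in> verts m n"
    show "v x = w x"
    proof (cases x)
      case (A i)
      have i: "i \<in> {1..m}" using x A by (simp add: A_in_verts)
      have "(\<Sum>j=1..n. z (B j)) = (\<Sum>j=1..n. z (A m))"
        by (rule sum.cong) (use const B_in_verts in blast)+
      moreover have "(\<Sum>j=1..n. z (A m)) = int n * z (A m)" by simp
      moreover have "z (A i) = z (A m)" using const x A by blast
      moreover have "v x - w x = int n * z (A i) - (\<Sum>j=1..n. z (B j))" using z x A Lz_A[OF i, where n=n and z=z] by simp
      ultimately show ?thesis by simp
    next
      case (B j)
      have j: "j \<in> {1..n}" using x B by (simp add: B_in_verts)
      have "(\<Sum>i=1..m. z (A i)) = (\<Sum>i=1..m. z (A m))"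
        by (rule sum.cong) (use const A_in_verts in blast)+
      moreover have "(\<Sum>i=1..m. z (A m)) = int m * z (A m)" by simp
      moreover have "z (B j) = z (A m)" using const x B by blast
      moreover have "v x - w x = int m * z (B j) - (\<Sum>i=1..m. z (A i))" using z x B Lz_B[OF j, where m=m and z=z] by simp
      ultimately show ?thesis by simp
    qed
  qed
qed

lemma park_eq:
  assumes m: "1 \<le> m" and pv: "parking m n v" and te: "topp_equiv m n u v"
    and out: "\<forall>x. x \<notin> verts m n \<longrightarrow> v x = 0"
  shows "park m n u = v"
  unfolding park_def
proof (rule the_equality)
  show "parking m n v \<and> topp_equiv m n u v \<and> (\<forall>x. x \<notin> verts m n \<longrightarrow> v x = 0)"
    using assms by blast
next
  fix v' assume H: "parking m n v' \<and> topp_equiv m n u v' \<and> (\<forall>x. x \<notin> verts m n \<longrightarrow> v' x = 0)"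
  obtain z1 where z1: "\<forall>x\<in>verts m n. u x - v x = (\<Sum>c\<in>verts m n. z1 c * Lap m n c x)"
    using te unfolding topp_equiv_def by blast
  obtain z2 where z2: "\<forall>x\<in>verts m n. u x - v' x = (\<Sum>c\<in>verts m n. z2 c * Lap m n c x)"
    using H unfolding topp_equiv_def by blast
  have "\<forall>x\<in>verts m n. v x - v' x = (\<Sum>c\<in>verts m n. (z2 c - z1 c) * Lap m n c x)"
  proof
    fix x assume "x \<in> verts m n"
    then have "v x - v' x = (\<Sum>c\<in>verts m n. z2 c * Lap m n c x) - (\<Sum>c\<in>verts m n. z1 c * Lap m n c x)"
      using z1 z2 by force
    then show "v x - v' x = (\<Sum>c\<in>verts m n. (z2 c - z1 c) * Lap m n c x)"
      by (simp add: sum_subtractf left_diff_distrib)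
  qed
  then have "topp_equiv m n v v'" unfolding topp_equiv_def by (rule exI[where x="\<lambda>c. z2 c - z1 c"])
  then have "\<forall>x\<in>verts m n. v x = v' x" using park_unique[OF m pv] H by blast
  then show "v' = v" using H out by (metis ext)
qed



lemma sorted_map_upt: "(\<And>i j. a \<le> i \<Longrightarrow> i \<le> j \<Longrightarrow> j < b \<Longrightarrow> f i \<le> f j) \<Longrightarrow> sorted (map f [a..<b])"
  by (auto simp: sorted_map sorted_wrt_iff_nth_less)

lemma Lap_sum0: assumes "c \<in> verts m n" shows "(\<Sum>x\<in>verts m n. Lap m n c x) = 0"
proof (cases c)
  case (A i)
  have i: "i \<in> {1..m}" using assms A by (simp add: A_in_verts)
  have 1: "(\<Sum>x=1..m. Lap m n (A i) (A x)) = (\<Sum>x=1..m. if i = x then int n else 0)"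
    by (rule sum.cong) (auto simp: LapA_A[OF i])
  have 2: "(\<Sum>x=1..n. Lap m n (A i) (B x)) = (\<Sum>x=1..n. -1)"
    by (rule sum.cong) (auto simp: LapA_B[OF i])
  show ?thesis unfolding A sum_verts 1 2 using i by simp
next
  case (B j)
  have j: "j \<in> {1..n}" using assms B by (simp add: B_in_verts)
  have 1: "(\<Sum>x=1..n. Lap m n (B j) (B x)) = (\<Sum>x=1..n. if j = x then int m else 0)"
    by (rule sum.cong) (auto simp: LapB_B[OF j])
  have 2: "(\<Sum>x=1..m. Lap m n (B j) (A x)) = (\<Sum>x=1..m. -1)"
    by (rule sum.cong) (auto simp: LapB_A[OF j])
  show ?thesis unfolding B sum_verts 1 2 using j by simp
qed

theorem mainTheorem6:
  fixes m n h :: nat and k :: int and u u' :: "vert \<Rightarrow> int"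
  assumes "1 \<le> m" and "1 \<le> n"
    and "stable m n u" and "sorted_config m n u"
    and h_def: "h = (LEAST i. 1 \<le> i \<and> i \<le> n \<and> rvec m n u i = Max (rvec m n u ` {1..n}))"
    and k_def: "k = u (B h) - rvec m n u h + 2"
    and u'_def: "u' = (\<lambda>x. u x + (rvec m n u h - 2) * Lap m n (A m) x
                         - (\<Sum>s\<in>{nat k..m-1}. Lap m n (A s) x)
                         - (\<Sum>t\<in>{h..n}. Lap m n (B t) x))"
  shows "(\<forall>x\<in>verts m n. u' x = park m n u x)
    \<and> k = 1 + int (card {j\<in>{1..m-1}. u (A j) + 1 \<le> int h - 1})
    \<and> (2 \<le> m \<longrightarrow> 1 \<le> k \<and> k \<le> int m - 1)
    \<and> (\<forall>i\<in>{1..n}. u' (B i) = u (B i) - u (B h) + int m * chi (i \<le> h - 1))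
    \<and> (\<forall>j\<in>{1..m-1}. u' (A j) = u (A j) - (int h - 1) + int n * chi (int j \<le> k - 1))
    \<and> u' (A m) = degree m n u - (\<Sum>i=1..n. u' (B i)) - (\<Sum>j=1..m-1. u' (A j))
    \<and> sorted (map (\<lambda>j. u' (A j)) ([nat k..<m] @ [1..<nat k]))
    \<and> sorted (map (\<lambda>i. u' (B i)) ([h..<n+1] @ [1..<h]))"
proof -
  note m1 = assms(1) and n1 = assms(2)
  define c where "c = (\<lambda>i::nat. int (card {j\<in>{1..m-1}. u (A j) + 1 \<le> int i - 1}))"
  define r where "r = rvec m n u"
  have r_eq: "\<And>i. r i = u (B i) + 1 - c i" unfolding r_def rvec_def c_def by simp
  have stA: "\<And>j. j \<in> {1..m-1} \<Longrightarrow> 0 \<le> u (A j) \<and> u (A j) \<le> int n - 1"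
    using assms(3) unfolding stable_def by blast
  have stB: "\<And>i. i \<in> {1..n} \<Longrightarrow> 0 \<le> u (B i) \<and> u (B i) \<le> int m - 1"
    using assms(3) unfolding stable_def by blast
  have soA: "\<And>j1 j2. j1 \<in> {1..m-1} \<Longrightarrow> j2 \<in> {1..m-1} \<Longrightarrow> j1 \<le> j2 \<Longrightarrow> u (A j1) \<le> u (A j2)"
    using assms(4) unfolding sorted_config_def by blast
  have soB: "\<And>j1 j2. j1 \<in> {1..n} \<Longrightarrow> j2 \<in> {1..n} \<Longrightarrow> j1 \<le> j2 \<Longrightarrow> u (B j1) \<le> u (B j2)"
    using assms(4) unfolding sorted_config_def by blast
  define P where "P = (\<lambda>i. 1 \<le> i \<and> i \<le> n \<and> r i = Max (r ` {1..n}))"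
  have hL: "h = (LEAST i. P i)" unfolding P_def r_def h_def ..
  have exP: "\<exists>i. P i"
  proof -
    have "Max (r ` {1..n}) \<in> r ` {1..n}" using n1 by (intro Max_in) auto
    then show ?thesis unfolding P_def by force
  qed
  have hP: "P h" unfolding hL by (rule LeastI_ex[OF exP])
  have h1: "1 \<le> h" and hn: "h \<le> n" using hP unfolding P_def by auto
  have hmax: "\<And>i. i \<in> {1..n} \<Longrightarrow> r i \<le> r h"
    using hP unfolding P_def by auto
  have hless: "\<And>i. 1 \<le> i \<Longrightarrow> i < h \<Longrightarrow> r i < r h"
  proof -
    fix i assume i: "1 \<le> i" "i < h"
    have "\<not> P i" using not_less_Least[of i P] i hL by blast
    then have "r i \<noteq> r h" using i hn hP unfolding P_def by auto
    moreover have "r i \<le> r h" using hmax i hn by auto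
    ultimately show "r i < r h" by simp
  qed
  have kc: "k = 1 + c h" using k_def r_eq[of h] unfolding r_def by simp
  have cnn: "\<And>i. 0 \<le> c i" unfolding c_def by simp
  have cle: "\<And>i. c i \<le> int m - 1"
  proof -
    fix i
    have "card {j\<in>{1..m-1}. u (A j) + 1 \<le> int i - 1} \<le> card {1..m-1}" by (rule card_mono) auto
    then show "c i \<le> int m - 1" unfolding c_def using m1 by simp
  qed
  have cmono: "\<And>i i'. i \<le> i' \<Longrightarrow> c i \<le> c i'"
  proof -
    fix i i' :: nat assume "i \<le> i'"
    then have "card {j\<in>{1..m-1}. u (A j) + 1 \<le> int i - 1} \<le> card {j\<in>{1..m-1}. u (A j) + 1 \<le> int i' - 1}"
      by (intro card_mono) auto
    then show "c i \<le> c i'" unfolding c_def by simp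
  qed
  have c1: "c 1 = 0"
  proof -
    have "{j\<in>{1..m-1}. u (A j) + 1 \<le> int 1 - 1} = {}" using stA by force
    then show ?thesis unfolding c_def by simp
  qed
  define K where "K = nat k"
  have k1: "1 \<le> k" using kc cnn by (simp add: add_increasing2)
  have kK: "int K = k" unfolding K_def using k1 by simp
  have K1: "1 \<le> K" using kK k1 by simp
  have Km: "K \<le> m" using kK kc cle[of h] by simp
  define X where "X = {j\<in>{1..m-1}. u (A j) + 1 \<le> int h - 1}"
  have cX: "int (card X) = int K - 1" unfolding X_def using kc kK c_def by simp
  have ks: "\<And>j. j \<in> {1..m-1} \<Longrightarrow> (j < K \<longleftrightarrow> u (A j) \<le> int h - 2)"
  proof -
    fix j assume j: "j \<in> {1..m-1}"
    show "j < K \<longleftrightarrow> u (A j) \<le> int h - 2"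
    proof
      assume jK: "j < K"
      show "u (A j) \<le> int h - 2"
      proof (rule ccontr)
        assume nu: "\<not> u (A j) \<le> int h - 2"
        have "X \<subseteq> {1..j-1}"
        proof
          fix j' assume j': "j' \<in> X"
          show "j' \<in> {1..j-1}"
          proof (rule ccontr)
            assume "j' \<notin> {1..j-1}"
            then have "j \<le> j'" using j' unfolding X_def by auto
            then have "u (A j) \<le> u (A j')" using soA j j' unfolding X_def by auto
            then show False using j' nu unfolding X_def by auto
          qed
        qed
        then have "card X \<le> j - 1" using card_mono[of "{1..j-1}" X] by simp
        moreover have "1 \<le> j" using j by simp
        ultimately show False using cX jK by linarith
      qed
    next
      assume ju: "u (A j) \<le> int h - 2"
      have "{1..j} \<subseteq> X"
      proof
        fix j' assume j': "j' \<in> {1..j}"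
        then have "u (A j') \<le> u (A j)" using soA j by auto
        then show "j' \<in> X" using j j' ju unfolding X_def by auto
      qed
      then have "j \<le> card X" using card_mono[of X "{1..j}"] unfolding X_def by simp
      then show "j < K" using cX by linarith
    qed
  qed
  have cardK: "card {K..m-1} = m - K" using m1 by simp
  have uB': "\<And>i. i \<in> {1..n} \<Longrightarrow> u' (B i) = u (B i) - u (B h) + (if i < h then int m else 0)"
  proof -
    fix i assume i: "i \<in> {1..n}"
    have 1: "Lap m n (A m) (B i) = -1" using LapA_B[of m m n i] i m1 by simp
    have 2: "(\<Sum>s\<in>{K..m-1}. Lap m n (A s) (B i)) = (\<Sum>s\<in>{K..m-1}. -1)"
      by (rule sum.cong) (use i K1 in \<open>auto simp: LapA_B\<close>)
    have 3: "(\<Sum>t\<in>{h..n}. Lap m n (B t) (B i)) = (\<Sum>t\<in>{h..n}. if i = t then int m else 0)"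
      by (rule sum.cong) (use h1 in \<open>auto simp: LapB_B\<close>)
    have 4: "(\<Sum>t\<in>{h..n}. if i = t then int m else 0) = (if h \<le> i then int m else 0)"
      using i by (simp add: sum.delta')
    have "u' (B i) = u (B i) + (r h - 2) * (-1) - (- int (m - K)) - (if h \<le> i then int m else 0)"
      unfolding u'_def r_def[symmetric] K_def[symmetric] using 1 2 3 4 cardK by simp
    then show "u' (B i) = u (B i) - u (B h) + (if i < h then int m else 0)"
      using kK Km k_def r_def by (auto simp: of_nat_diff)
  qed
  have uA': "\<And>j. j \<in> {1..m-1} \<Longrightarrow> u' (A j) = u (A j) - (int h - 1) + (if j < K then int n else 0)"
  proof -
    fix j assume j: "j \<in> {1..m-1}"
    have 1: "Lap m n (A m) (A j) = 0" using LapA_A[of m m n j] j m1 by auto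
    have 2: "(\<Sum>s\<in>{K..m-1}. Lap m n (A s) (A j)) = (\<Sum>s\<in>{K..m-1}. if j = s then int n else 0)"
      by (rule sum.cong) (use K1 in \<open>auto simp: LapA_A\<close>)
    have 3: "(\<Sum>t\<in>{h..n}. Lap m n (B t) (A j)) = (\<Sum>t\<in>{h..n}. -1)"
      by (rule sum.cong) (use h1 j in \<open>auto simp: LapB_A\<close>)
    have "u' (A j) = u (A j) - (if K \<le> j then int n else 0) + int (n + 1 - h)"
      unfolding u'_def K_def[symmetric] using 1 2 3 j by (simp add: sum.delta')
    then show "u' (A j) = u (A j) - (int h - 1) + (if j < K then int n else 0)"
      using hn by (auto simp: of_nat_diff)
  qed
  have cdiff: "\<And>i i'. i \<le> i' \<Longrightarrow> int (card ({j\<in>{1..m-1}. u (A j) + 1 \<le> int i' - 1} - {j\<in>{1..m-1}. u (A j) + 1 \<le> int i - 1})) = c i' - c i"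
  proof -
    fix i i' :: nat assume ii: "i \<le> i'"
    have sub: "{j\<in>{1..m-1}. u (A j) + 1 \<le> int i - 1} \<subseteq> {j\<in>{1..m-1}. u (A j) + 1 \<le> int i' - 1}" using ii by auto
    show "int (card ({j\<in>{1..m-1}. u (A j) + 1 \<le> int i' - 1} - {j\<in>{1..m-1}. u (A j) + 1 \<le> int i - 1})) = c i' - c i"
      unfolding c_def using card_Diff_subset[OF _ sub] card_mono[OF _ sub] by (simp add: of_nat_diff)
  qed
  have nonneg: "\<forall>x\<in>verts m n - {A m}. 0 \<le> u' x"
  proof
    fix x assume x: "x \<in> verts m n - {A m}"
    show "0 \<le> u' x"
    proof (cases x)
      case (A j)
      have j: "j \<in> {1..m-1}" using x A by (auto simp: A_in_verts)
      show ?thesis using uA'[OF j] ks[OF j] stA[OF j] hn A by auto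
    next
      case (B i)
      have i: "i \<in> {1..n}" using x B by (auto simp: B_in_verts)
      have "i < h \<Longrightarrow> u (B h) \<le> int m - 1" using stB h1 hn by auto
      moreover have "\<not> i < h \<Longrightarrow> u (B h) \<le> u (B i)" using soB i h1 hn by auto
      ultimately show ?thesis using uB'[OF i] stB[OF i] B by auto
    qed
  qed
  have park': "parking m n u'"
    unfolding parking_def
  proof (intro conjI allI impI)
    show "\<forall>x\<in>verts m n - {A m}. 0 \<le> u' x" by (rule nonneg)
  next
    fix C assume C: "C \<subseteq> verts m n - {A m} \<and> C \<noteq> {}"
    show "\<exists>x\<in>verts m n - {A m}. u' x - LapSet m n C x < 0"
    proof (rule ccontr)
      assume "\<not> ?thesis"
      then have H: "\<And>x. x \<in> verts m n - {A m} \<Longrightarrow> 0 \<le> u' x - LapSet m n C x" by force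
      define S where "S = {i. A i \<in> C}"
      define T where "T = {j. B j \<in> C}"
      have CST: "C = A`S \<union> B`T" unfolding S_def T_def by (rule C_decomp)
      have S: "S \<subseteq> {1..m-1}" using C unfolding S_def verts_def by auto
      have T: "T \<subseteq> {1..n}" using C unfolding T_def verts_def by auto
      have "{1..m-1} \<subseteq> {1..m}" by auto
      then have S': "S \<subseteq> {1..m}" using S by (rule subset_trans[rotated])
      have finS: "finite S" and finT: "finite T" using S T finite_subset by blast+
      have hA: "\<And>j. j \<in> S \<Longrightarrow> 0 \<le> u' (A j) - int n + int (card T)"
      proof -
        fix j assume j: "j \<in> S"
        have "j \<in> {1..m-1}" using j S by blast
        then have jv: "A j \<in> verts m n - {A m}" by (auto simp: A_in_verts)
        have jm: "j \<in> {1..m}" using S' j by blast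
        show "0 \<le> u' (A j) - int n + int (card T)"
          using H[OF jv] LapSet_A[OF S' T jm] j unfolding CST by simp
      qed
      have hB: "\<And>i. i \<in> T \<Longrightarrow> 0 \<le> u' (B i) - int m + int (card S)"
      proof -
        fix i assume i: "i \<in> T"
        have "i \<in> {1..n}" using i T by blast
        then have iv: "B i \<in> verts m n - {A m}" by (auto simp: B_in_verts)
        have iT: "i \<in> {1..n}" using T i by blast
        show "0 \<le> u' (B i) - int m + int (card S)"
          using H[OF iv] LapSet_B[OF S' T iT] i unfolding CST by simp
      qed
      show False
      proof (cases "T = {}")
        case True
        then have "S \<noteq> {}" using C CST by auto
        then obtain j where j: "j \<in> S" by auto
        have j': "j \<in> {1..m-1}" using j S by blast
        show False using hA[OF j] True uA'[OF j'] ks[OF j'] stA[OF j'] h1 by (auto split: if_splits)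
      next
        case Tne: False
        show False
        proof (cases "T \<inter> {h..n} = {}")
          case False
          define i0 where "i0 = Min (T \<inter> {h..n})"
          have i0: "i0 \<in> T \<inter> {h..n}" unfolding i0_def using False finT by (intro Min_in) auto
          have i0min: "\<And>i. i \<in> T \<inter> {h..n} \<Longrightarrow> i0 \<le> i" unfolding i0_def using finT by auto
          have i0n: "i0 \<in> {1..n}" using i0 T by blast
          have "T \<subseteq> {1..n} - {h..<i0}" using T i0min by force
          then have "card T \<le> card ({1..n} - {h..<i0})" by (intro card_mono) auto
          also have "\<dots> = n - (i0 - h)" using h1 i0 by (subst card_Diff_subset) auto
          finally have cT: "int (card T) \<le> int n - (int i0 - int h)" using i0 by auto
          define Y where "Y = {j\<in>{1..m-1}. u (A j) + 1 \<le> int i0 - 1} - {j\<in>{1..m-1}. u (A j) + 1 \<le> int h - 1}"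
          have cY: "int (card Y) = c i0 - c h" unfolding Y_def using cdiff[of h i0] i0 by auto
          have "S \<subseteq> {1..m-1} - Y"
          proof
            fix j assume j: "j \<in> S"
            have j': "j \<in> {1..m-1}" using j S by blast
            show "j \<in> {1..m-1} - Y"
            proof (rule ccontr)
              assume "j \<notin> {1..m-1} - Y"
              then have jY: "j \<in> Y" using j' by auto
              then have "\<not> j < K" using ks[OF j'] unfolding Y_def by auto
              then show False using hA[OF j] uA'[OF j'] jY cT unfolding Y_def by auto
            qed
          qed
          then have "card S \<le> card ({1..m-1} - Y)" by (intro card_mono) auto
          also have "\<dots> = (m - 1) - card Y" unfolding Y_def by (subst card_Diff_subset) auto
          finally have cS0: "card S \<le> m - 1 - card Y" .
          have "card Y \<le> card {1..m-1}" unfolding Y_def by (intro card_mono) auto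
          then have "card Y \<le> m - 1" by simp
          then have cS: "int (card S) \<le> int m - 1 - (c i0 - c h)" using cS0 cY m1 by linarith
          have "u' (B i0) = u (B i0) - u (B h)" using uB'[OF i0n] i0 by auto
          moreover have "r i0 \<le> r h" using hmax[OF i0n] .
          ultimately show False using hB[of i0] i0 cS r_eq[of i0] r_eq[of h] by auto
        next
          case True
          define i0 where "i0 = Min T"
          have i0: "i0 \<in> T" unfolding i0_def using Tne finT by (intro Min_in) auto
          have i0min: "\<And>i. i \<in> T \<Longrightarrow> i0 \<le> i" unfolding i0_def using finT by auto
          have i0n: "i0 \<in> {1..n}" using i0 T by blast
          have i0h: "i0 < h" using True i0 i0n by force
          have "T \<subseteq> {i0..<h}" using T i0min True by force
          then have "card T \<le> card {i0..<h}" by (intro card_mono) auto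
          then have cT: "int (card T) \<le> int h - int i0" using i0h by auto
          define Y where "Y = {j\<in>{1..m-1}. u (A j) + 1 \<le> int h - 1} - {j\<in>{1..m-1}. u (A j) + 1 \<le> int i0 - 1}"
          have cY: "int (card Y) = c h - c i0" unfolding Y_def using cdiff[of i0 h] i0h by auto
          have "S \<subseteq> Y"
          proof
            fix j assume j: "j \<in> S"
            have j': "j \<in> {1..m-1}" using j S by blast
            have "j < K"
            proof (rule ccontr)
              assume "\<not> j < K"
              then show False using hA[OF j] uA'[OF j'] stA[OF j'] cT i0n by auto
            qed
            then show "j \<in> Y" using hA[OF j] uA'[OF j'] ks[OF j'] cT j' unfolding Y_def by auto
          qed
          then have "card S \<le> card Y" unfolding Y_def by (intro card_mono) auto
          then have cS: "int (card S) \<le> c h - c i0" using cY by linarith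
          have "u' (B i0) = u (B i0) - u (B h) + int m" using uB'[OF i0n] i0h by auto
          moreover have "r i0 < r h" using hless[of i0] i0n i0h by auto
          ultimately show False using hB[of i0] i0 cS r_eq[of i0] r_eq[of h] by auto
        qed
      qed
    qed
  qed
  define v0 where "v0 = (\<lambda>x. if x \<in> verts m n then u' x else 0)"
  have pv0: "parking m n v0" using park' unfolding parking_def v0_def by auto
  have out: "\<forall>x. x \<notin> verts m n \<longrightarrow> v0 x = 0" unfolding v0_def by simp
  define z where "z = (\<lambda>c. case c of A i \<Rightarrow> (if i = m then -(r h - 2) else if K \<le> i then 1 else 0)
                                | B j \<Rightarrow> (if h \<le> j then (1::int) else 0))"
  have m_ins: "{1..m} = insert m {1..m-1}" using m1 by auto
  have te: "topp_equiv m n u v0"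
    unfolding topp_equiv_def
  proof (rule exI[where x=z], intro ballI)
    fix x assume x: "x \<in> verts m n"
    have lhs: "u x - v0 x = -(r h - 2) * Lap m n (A m) x + (\<Sum>s\<in>{K..m-1}. Lap m n (A s) x) + (\<Sum>t\<in>{h..n}. Lap m n (B t) x)"
      unfolding v0_def u'_def r_def[symmetric] K_def[symmetric] using x by (simp add: algebra_simps)
    have b: "(\<Sum>j=1..n. z (B j) * Lap m n (B j) x) = (\<Sum>t\<in>{h..n}. Lap m n (B t) x)"
    proof -
      have "(\<Sum>j=1..n. z (B j) * Lap m n (B j) x) = (\<Sum>j\<in>{1..n}. if h \<le> j then Lap m n (B j) x else 0)"
        unfolding z_def by (rule sum.cong) auto
      also have "\<dots> = (\<Sum>j\<in>{j\<in>{1..n}. h \<le> j}. Lap m n (B j) x)" by (rule sum.inter_filter[symmetric]) simp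
      also have "{j\<in>{1..n}. h \<le> j} = {h..n}" using h1 by auto
      finally show ?thesis .
    qed
    have a: "(\<Sum>i=1..m. z (A i) * Lap m n (A i) x) = -(r h - 2) * Lap m n (A m) x + (\<Sum>s\<in>{K..m-1}. Lap m n (A s) x)"
    proof -
      have "(\<Sum>i=1..m. z (A i) * Lap m n (A i) x) = z (A m) * Lap m n (A m) x + (\<Sum>i\<in>{1..m-1}. z (A i) * Lap m n (A i) x)"
        unfolding m_ins by (subst sum.insert) auto
      also have "(\<Sum>i\<in>{1..m-1}. z (A i) * Lap m n (A i) x) = (\<Sum>i\<in>{1..m-1}. if K \<le> i then Lap m n (A i) x else 0)"
        unfolding z_def by (rule sum.cong) auto
      also have "\<dots> = (\<Sum>i\<in>{i\<in>{1..m-1}. K \<le> i}. Lap m n (A i) x)" by (rule sum.inter_filter[symmetric]) simp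
      also have "{i\<in>{1..m-1}. K \<le> i} = {K..m-1}" using K1 by auto
      finally show ?thesis unfolding z_def by simp
    qed
    show "u x - v0 x = (\<Sum>c\<in>verts m n. z c * Lap m n c x)"
      unfolding lhs sum_verts a b ..
  qed
  have parkeq: "park m n u = v0" by (rule park_eq[OF m1 pv0 te out])
  have P1: "\<forall>x\<in>verts m n. u' x = park m n u x" unfolding parkeq v0_def by simp
  have P2: "k = 1 + int (card {j\<in>{1..m-1}. u (A j) + 1 \<le> int h - 1})" using kc unfolding c_def .
  have P3: "2 \<le> m \<longrightarrow> 1 \<le> k \<and> k \<le> int m - 1"
  proof
    assume m2: "2 \<le> m"
    have "c h \<le> int m - 2"
    proof (rule ccontr)
      assume "\<not> c h \<le> int m - 2"
      then have ch: "c h = int m - 1" using cle[of h] by linarith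
      show False
      proof (cases "h = 1")
        case True then show False using ch c1 m2 by simp
      next
        case False
        then have "r 1 < r h" using hless[of 1] h1 by simp
        then show False using r_eq[of 1] r_eq[of h] c1 ch stB[of 1] stB[of h] h1 hn n1 by auto
      qed
    qed
    then show "1 \<le> k \<and> k \<le> int m - 1" using k1 kc by simp
  qed
  have P4: "\<forall>i\<in>{1..n}. u' (B i) = u (B i) - u (B h) + int m * chi (i \<le> h - 1)"
  proof
    fix i assume i: "i \<in> {1..n}"
    have "(i \<le> h - 1) = (i < h)" using h1 by auto
    then show "u' (B i) = u (B i) - u (B h) + int m * chi (i \<le> h - 1)" using uB'[OF i] unfolding chi_def by simp
  qed
  have P5: "\<forall>j\<in>{1..m-1}. u' (A j) = u (A j) - (int h - 1) + int n * chi (int j \<le> k - 1)"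
  proof
    fix j assume j: "j \<in> {1..m-1}"
    have "(int j \<le> k - 1) = (j < K)" using kK by auto
    then show "u' (A j) = u (A j) - (int h - 1) + int n * chi (int j \<le> k - 1)" using uA'[OF j] unfolding chi_def by simp
  qed
  have tot: "(\<Sum>x\<in>verts m n. u' x) = (\<Sum>x\<in>verts m n. u x)"
  proof -
    have "(\<Sum>x\<in>verts m n. u' x) = (\<Sum>x\<in>verts m n. u x) + (r h - 2) * (\<Sum>x\<in>verts m n. Lap m n (A m) x)
        - (\<Sum>x\<in>verts m n. \<Sum>s\<in>{K..m-1}. Lap m n (A s) x) - (\<Sum>x\<in>verts m n. \<Sum>t\<in>{h..n}. Lap m n (B t) x)"
      unfolding u'_def r_def[symmetric] K_def[symmetric] by (simp add: sum.distrib sum_subtractf sum_distrib_left)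
    also have "(\<Sum>x\<in>verts m n. \<Sum>s\<in>{K..m-1}. Lap m n (A s) x) = (\<Sum>s\<in>{K..m-1}. \<Sum>x\<in>verts m n. Lap m n (A s) x)"
      by (rule sum.swap)
    also have "\<dots> = 0" by (rule sum.neutral) (use K1 in \<open>auto intro!: Lap_sum0 simp: A_in_verts\<close>)
    also have "(\<Sum>x\<in>verts m n. \<Sum>t\<in>{h..n}. Lap m n (B t) x) = (\<Sum>t\<in>{h..n}. \<Sum>x\<in>verts m n. Lap m n (B t) x)"
      by (rule sum.swap)
    also have "\<dots> = 0" by (rule sum.neutral) (use h1 in \<open>auto intro!: Lap_sum0 simp: B_in_verts\<close>)
    also have "(\<Sum>x\<in>verts m n. Lap m n (A m) x) = 0" by (rule Lap_sum0) (use m1 in \<open>simp add: A_in_verts\<close>)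
    finally show ?thesis by simp
  qed
  have P6: "u' (A m) = degree m n u - (\<Sum>i=1..n. u' (B i)) - (\<Sum>j=1..m-1. u' (A j))"
  proof -
    have "degree m n u = (\<Sum>i=1..m. u' (A i)) + (\<Sum>j=1..n. u' (B j))"
      using tot sum_verts[of "\<lambda>x. u' x" m n] unfolding degree_def by simp
    also have "(\<Sum>i=1..m. u' (A i)) = u' (A m) + (\<Sum>i=1..m-1. u' (A i))"
      unfolding m_ins by (subst sum.insert) auto
    finally show ?thesis by simp
  qed
  have P7: "sorted (map (\<lambda>j. u' (A j)) ([nat k..<m] @ [1..<nat k]))"
    unfolding K_def[symmetric] map_append sorted_append
  proof (intro conjI ballI)
    show "sorted (map (\<lambda>j. u' (A j)) [K..<m])"
    proof (rule sorted_map_upt)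
      fix i j assume ij: "K \<le> i" "i \<le> j" "j < m"
      have i: "i \<in> {1..m-1}" and j: "j \<in> {1..m-1}" using ij K1 by auto
      show "u' (A i) \<le> u' (A j)" using uA'[OF i] uA'[OF j] soA[OF i j] ij by auto
    qed
  next
    show "sorted (map (\<lambda>j. u' (A j)) [1..<K])"
    proof (rule sorted_map_upt)
      fix i j assume ij: "1 \<le> i" "i \<le> j" "j < K"
      have i: "i \<in> {1..m-1}" and j: "j \<in> {1..m-1}" using ij Km by auto
      show "u' (A i) \<le> u' (A j)" using uA'[OF i] uA'[OF j] soA[OF i j] ij by auto
    qed
  next
    fix x y assume x: "x \<in> set (map (\<lambda>j. u' (A j)) [K..<m])" and y: "y \<in> set (map (\<lambda>j. u' (A j)) [1..<K])"
    obtain i where i: "i \<in> {K..<m}" "x = u' (A i)" using x unfolding set_map set_upt by blast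
    obtain j where j: "j \<in> {1..<K}" "y = u' (A j)" using y unfolding set_map set_upt by blast
    have i': "i \<in> {1..m-1}" and j': "j \<in> {1..m-1}" using i j K1 Km by auto
    show "x \<le> y" using uA'[OF i'] uA'[OF j'] stA[OF i'] stA[OF j'] i j by auto
  qed
  have P8: "sorted (map (\<lambda>i. u' (B i)) ([h..<n+1] @ [1..<h]))"
    unfolding map_append sorted_append
  proof (intro conjI ballI)
    show "sorted (map (\<lambda>i. u' (B i)) [h..<n+1])"
    proof (rule sorted_map_upt)
      fix i j assume ij: "h \<le> i" "i \<le> j" "j < n+1"
      have i: "i \<in> {1..n}" and j: "j \<in> {1..n}" using ij h1 by auto
      show "u' (B i) \<le> u' (B j)" using uB'[OF i] uB'[OF j] soB[OF i j] ij by auto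
    qed
  next
    show "sorted (map (\<lambda>i. u' (B i)) [1..<h])"
    proof (rule sorted_map_upt)
      fix i j assume ij: "1 \<le> i" "i \<le> j" "j < h"
      have i: "i \<in> {1..n}" and j: "j \<in> {1..n}" using ij hn by auto
      show "u' (B i) \<le> u' (B j)" using uB'[OF i] uB'[OF j] soB[OF i j] ij by auto
    qed
  next
    fix x y assume x: "x \<in> set (map (\<lambda>i. u' (B i)) [h..<n+1])" and y: "y \<in> set (map (\<lambda>i. u' (B i)) [1..<h])"
    obtain i where i: "i \<in> {h..<n+1}" "x = u' (B i)" using x unfolding set_map set_upt by blast
    obtain j where j: "j \<in> {1..<h}" "y = u' (B j)" using y unfolding set_map set_upt by blast
    have i': "i \<in> {1..n}" and j': "j \<in> {1..n}" using i j h1 hn by auto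
    show "x \<le> y" using uB'[OF i'] uB'[OF j'] stB[OF i'] stB[OF j'] i j by auto
  qed
  show ?thesis using P1 P2 P3 P4 P5 P6 P7 P8 by blast
qed

end
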